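(* Let $k\ge 1$ and let $v_0,\pi_1,v_1,\dots,\pi_k$ be generated by Approximate Value Iteration with errors $\epsilon_1,\dots,\epsilon_{k-1}$, and $\epsilon=\max_{1\le j<k}\operatorname{span}(\epsilon_j)$ (with $\epsilon=0$ if $k=1$). Let $\pi_{k,k}$ be the periodic non-stationary policy $\pi_k\,\pi_{k-1}\cdots\pi_1\,\pi_k\,\pi_{k-1}\cdots\pi_1\cdots$. Then $$\|v_*-v_{\pi_{k,k}}\|_\infty \le \left(\frac{\gamma}{1-\gamma}-\frac{\gamma^k}{1-\gamma^k}\right)\epsilon+\frac{\gamma^k}{1-\gamma^k}\operatorname{span}(v_*-v_0).$$
   Context: A Markov Decision Process with finite state space $S$, finite action space $A$, reward function $r(s,a)$, transition probabilities $p(s'|s,a)$ and discount factor $\gamma\in[0,1)$. For a (deterministic, stationary) policy $\pi:S\to A$, let $r_\pi(s)=r(s,\pi(s))$, let $P_\pi$ be the stochastic matrix $P_\pi(s,s')=p(s'|s,\pi(s))$, and let $T_\pi v=r_\pi+\gamma P_\pi v$ be the Bellman operator of $\pi$; $v_\pi$ is its unique fixed point. The Bellman optimality operator is $Tv=\max_\pi T_\pi v$ (componentwise), $v_*$ is its fixed point (the optimal value), and a policy $\pi$ is greedy with respect to $v$ if $T_\pi v=Tv$. For $f:S\to\mathbb R$, $\operatorname{span}(f)=\max_s f(s)-\min_s f(s)$. Approximate Value Iteration: from arbitrary $v_0$, for $j\ge0$ pick any $\pi_{j+1}$ greedy w.r.t. $v_j$ and set $v_{j+1}=T_{\pi_{j+1}}v_j+\epsilon_{j+1}$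 with arbitrary errors $\epsilon_{j+1}:S\to\mathbb R$. A non-stationary policy $\sigma_0\sigma_1\cdots$ uses $\sigma_t$ at time $t$, with value $\sum_{t\ge0}\gamma^t P_{\sigma_0}\cdots P_{\sigma_{t-1}}r_{\sigma_t}$. *)

theory Defs
  imports "HOL-Analysis.Analysis"
begin

text \<open>Finite MDP: states of type 's::finite, actions of type 'a::finite,
  reward r s a, transition probabilities p s a s', discount g.
  Functions S -> R are represented as 's \<Rightarrow> real.\<close>

definition mdp :: "('s::finite \<Rightarrow> 'a::finite \<Rightarrow> real) \<Rightarrow> ('s \<Rightarrow> 'a \<Rightarrow> 's \<Rightarrow> real) \<Rightarrow> real \<Rightarrow> bool" where
  "mdp r p g \<longleftrightarrow> (\<forall>s a s'. 0 \<le> p s a s') \<and> (\<forall>s a. (\<Sum>s'\<in>UNIV. p s a s') = 1) \<and> 0 \<le> g \<and> g < 1"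

definition Pmat :: "('s::finite \<Rightarrow> 'a \<Rightarrow> 's \<Rightarrow> real) \<Rightarrow> ('s \<Rightarrow> 'a) \<Rightarrow> 's \<Rightarrow> 's \<Rightarrow> real" where
  "Pmat p \<pi> s s' = p s (\<pi> s) s'"

definition Tpol :: "('s::finite \<Rightarrow> 'a \<Rightarrow> real) \<Rightarrow> ('s \<Rightarrow> 'a \<Rightarrow> 's \<Rightarrow> real) \<Rightarrow> real \<Rightarrow> ('s \<Rightarrow> 'a) \<Rightarrow> ('s \<Rightarrow> real) \<Rightarrow> 's \<Rightarrow> real" where
  "Tpol r p g \<pi> v s = r s (\<pi> s) + g * (\<Sum>s'\<in>UNIV. Pmat p \<pi> s s' * v s')"

definition vpol :: "('s::finite \<Rightarrow> 'a \<Rightarrow> real) \<Rightarrow> ('s \<Rightarrow> 'a \<Rightarrow> 's \<Rightarrow> real) \<Rightarrow> real \<Rightarrow> ('s \<Rightarrow> 'a) \<Rightarrow> 's \<Rightarrow> real" where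
  "vpol r p g \<pi> = (THE v. Tpol r p g \<pi> v = v)"

definition Topt :: "('s::finite \<Rightarrow> 'a::finite \<Rightarrow> real) \<Rightarrow> ('s \<Rightarrow> 'a \<Rightarrow> 's \<Rightarrow> real) \<Rightarrow> real \<Rightarrow> ('s \<Rightarrow> real) \<Rightarrow> 's \<Rightarrow> real" where
  "Topt r p g v s = Max ((\<lambda>\<pi>. Tpol r p g \<pi> v s) ` UNIV)"

definition vopt :: "('s::finite \<Rightarrow> 'a::finite \<Rightarrow> real) \<Rightarrow> ('s \<Rightarrow> 'a \<Rightarrow> 's \<Rightarrow> real) \<Rightarrow> real \<Rightarrow> 's \<Rightarrow> real" where
  "vopt r p g = (THE v. Topt r p g v = v)"

definition greedy :: "('s::finite \<Rightarrow> 'a::finite \<Rightarrow> real) \<Rightarrow> ('s \<Rightarrow> 'a \<Rightarrow> 's \<Rightarrow> real) \<Rightarrow> real \<Rightarrow> ('s \<Rightarrow> 'a) \<Rightarrow> ('s \<Rightarrow> real) \<Rightarrow> bool" where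
  "greedy r p g \<pi> v \<longleftrightarrow> Tpol r p g \<pi> v = Topt r p g v"

definition span :: "('s::finite \<Rightarrow> real) \<Rightarrow> real" where
  "span f = Max (range f) - Min (range f)"

definition supnorm :: "('s::finite \<Rightarrow> real) \<Rightarrow> real" where
  "supnorm f = Max (range (\<lambda>s. \<bar>f s\<bar>))"

fun Pprod :: "('s::finite \<Rightarrow> 'a \<Rightarrow> 's \<Rightarrow> real) \<Rightarrow> (nat \<Rightarrow> 's \<Rightarrow> 'a) \<Rightarrow> nat \<Rightarrow> 's \<Rightarrow> 's \<Rightarrow> real" where
  "Pprod p \<sigma> 0 s s' = (if s = s' then 1 else 0)"
| "Pprod p \<sigma> (Suc t) s s' = (\<Sum>u\<in>UNIV. Pprod p \<sigma> t s u * Pmat p (\<sigma> t) u s')"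

definition vns :: "('s::finite \<Rightarrow> 'a \<Rightarrow> real) \<Rightarrow> ('s \<Rightarrow> 'a \<Rightarrow> 's \<Rightarrow> real) \<Rightarrow> real \<Rightarrow> (nat \<Rightarrow> 's \<Rightarrow> 'a) \<Rightarrow> 's \<Rightarrow> real" where
  "vns r p g \<sigma> s = (\<Sum>t. g ^ t * (\<Sum>s'\<in>UNIV. Pprod p \<sigma> t s s' * r s' (\<sigma> t s')))"

end

theory Submission
  imports Defs
begin


definition mx :: "('s::finite \<Rightarrow> real) \<Rightarrow> real" where "mx f = Max (range f)"
definition mn :: "('s::finite \<Rightarrow> real) \<Rightarrow> real" where "mn f = Min (range f)"

lemma mx_ge: "f s \<le> mx (f::'s::finite \<Rightarrow> real)"
  unfolding mx_def by (rule Max_ge) auto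
lemma mx_le: "(\<And>s. f s \<le> c) \<Longrightarrow> mx (f::'s::finite \<Rightarrow> real) \<le> c"
  unfolding mx_def by (subst Max_le_iff) auto
lemma mn_le: "mn (f::'s::finite \<Rightarrow> real) \<le> f s"
  unfolding mn_def by (rule Min_le) auto
lemma mn_ge: "(\<And>s. c \<le> f s) \<Longrightarrow> c \<le> mn (f::'s::finite \<Rightarrow> real)"
  unfolding mn_def by (subst Min_ge_iff) auto
lemma mn_att: "\<exists>s. mn (f::'s::finite \<Rightarrow> real) = f s"
proof -
  have "Min (range f) \<in> range f" by (rule Min_in) auto
  thus ?thesis unfolding mn_def by (metis rangeE)
qed
lemma span_mx: "span f = mx f - mn f" unfolding span_def mx_def mn_def by simp

lemma Tpol_up:
  assumes "mdp r p g" "\<And>s. x s - y s \<le> c"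
  shows "Tpol r p g \<pi> x s - Tpol r p g \<pi> y s \<le> g * c"
proof -
  have P0: "\<And>s'. 0 \<le> Pmat p \<pi> s s'" and P1: "(\<Sum>s'\<in>UNIV. Pmat p \<pi> s s') = 1" and g0: "0 \<le> g"
    using assms(1) unfolding mdp_def Pmat_def by auto
  have "(\<Sum>s'\<in>UNIV. Pmat p \<pi> s s' * x s') - (\<Sum>s'\<in>UNIV. Pmat p \<pi> s s' * y s')
      = (\<Sum>s'\<in>UNIV. Pmat p \<pi> s s' * (x s' - y s'))"
    by (simp add: sum_subtractf right_diff_distrib)
  also have "\<dots> \<le> (\<Sum>s'\<in>UNIV. Pmat p \<pi> s s' * c)"
    by (rule sum_mono) (rule mult_left_mono[OF assms(2) P0])
  also have "\<dots> = c" using P1 by (simp add: sum_distrib_right[symmetric])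
  finally have "(\<Sum>s'\<in>UNIV. Pmat p \<pi> s s' * x s') - (\<Sum>s'\<in>UNIV. Pmat p \<pi> s s' * y s') \<le> c" .
  from mult_left_mono[OF this g0] show ?thesis
    unfolding Tpol_def by (simp add: right_diff_distrib)
qed

lemma Tpol_low:
  assumes "mdp r p g" "\<And>s. c \<le> x s - y s"
  shows "g * c \<le> Tpol r p g \<pi> x s - Tpol r p g \<pi> y s"
proof -
  have "Tpol r p g \<pi> y s - Tpol r p g \<pi> x s \<le> g * (-c)"
    by (rule Tpol_up[OF assms(1)]) (use assms(2) in \<open>smt (verit)\<close>)
  thus ?thesis by simp
qed

lemma Topt_ge: "Tpol r p g \<pi> x s \<le> Topt r p g x s"
  unfolding Topt_def by (rule Max_ge) auto

lemma Topt_att: "\<exists>\<pi>. Topt r p g x s = Tpol r p g \<pi> x s"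
proof -
  have "Topt r p g x s \<in> (\<lambda>\<pi>. Tpol r p g \<pi> x s) ` UNIV" unfolding Topt_def by (rule Max_in) auto
  thus ?thesis by auto
qed

lemma Topt_up:
  assumes "mdp r p g" "\<And>s. x s - y s \<le> c"
  shows "Topt r p g x s - Topt r p g y s \<le> g * c"
proof -
  obtain \<pi> where e: "Topt r p g x s = Tpol r p g \<pi> x s" using Topt_att by blast
  have "Tpol r p g \<pi> y s \<le> Topt r p g y s" by (rule Topt_ge)
  moreover have "Tpol r p g \<pi> x s - Tpol r p g \<pi> y s \<le> g * c" by (rule Tpol_up[OF assms])
  ultimately show ?thesis using e by linarith
qed

lemma Topt_uniq:
  assumes m: "mdp r p g" and x: "Topt r p g x = x" and y: "Topt r p g y = y"
  shows "x \<le> y"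
proof -
  define c where "c = mx (\<lambda>s. x s - y s)"
  have "\<And>s. x s - y s \<le> c" unfolding c_def by (rule mx_ge)
  hence "\<And>s. x s - y s \<le> g * c" using Topt_up[OF m] x y by metis
  hence "c \<le> g * c" unfolding c_def by (rule mx_le)
  moreover have "g < 1" using m unfolding mdp_def by auto
  ultimately have "c \<le> 0" by (smt (verit) mult_le_cancel_right1)
  hence "\<And>s. x s \<le> y s" using \<open>\<And>s. x s - y s \<le> c\<close> by (smt (verit))
  thus ?thesis by (simp add: le_fun_def)
qed

lemma Topt_exists:
  assumes m: "mdp r p g"
  shows "\<exists>v. Topt r p g v = v"
proof -
  define X where "X n = (Topt r p g ^^ n) (\<lambda>_. 0)" for n
  have XS: "X (Suc n) = Topt r p g (X n)" for n unfolding X_def by simp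
  have g0: "0 \<le> g" and g1: "g < 1" using m unfolding mdp_def by auto
  define C where "C = mx (\<lambda>s. \<bar>X 1 s - X 0 s\<bar>)"
  have bnd: "\<forall>s. \<bar>X (Suc n) s - X n s\<bar> \<le> g ^ n * C" for n
  proof (induction n)
    case 0 then show ?case unfolding C_def using mx_ge[of "\<lambda>s. \<bar>X 1 s - X 0 s\<bar>"] by simp
  next
    case (Suc n)
    show ?case
    proof
      fix s
      have a: "\<And>s. X (Suc n) s - X n s \<le> g^n * C" and b: "\<And>s. X n s - X (Suc n) s \<le> g^n * C"
        using Suc by (smt (verit))+
      have "Topt r p g (X (Suc n)) s - Topt r p g (X n) s \<le> g * (g^n * C)"
        by (rule Topt_up[OF m a])
      moreover have "Topt r p g (X n) s - Topt r p g (X (Suc n)) s \<le> g * (g^n * C)"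
        by (rule Topt_up[OF m b])
      ultimately have "X (Suc (Suc n)) s - X (Suc n) s \<le> g * (g^n * C)"
        "X (Suc n) s - X (Suc (Suc n)) s \<le> g * (g^n * C)" by (simp_all only: XS)
      thus "\<bar>X (Suc (Suc n)) s - X (Suc n) s\<bar> \<le> g ^ Suc n * C" by simp
    qed
  qed
  have summ: "summable (\<lambda>n. X (Suc n) s - X n s)" for s
  proof (rule summable_comparison_test)
    show "\<exists>N. \<forall>n\<ge>N. norm (X (Suc n) s - X n s) \<le> g ^ n * C" using bnd by auto
    show "summable (\<lambda>n. g ^ n * C)" using g0 g1 by (intro summable_mult2 summable_geometric) simp
  qed
  define L where "L s = X 0 s + (\<Sum>n. X (Suc n) s - X n s)" for s
  have conv: "(\<lambda>n. X n s) \<longlonglongrightarrow> L s" for s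
  proof -
    have "(\<lambda>n. X 0 s + (\<Sum>i<n. X (Suc i) s - X i s)) \<longlonglongrightarrow> L s"
      unfolding L_def by (intro tendsto_add tendsto_const summable_LIMSEQ summ)
    thus ?thesis using sum_lessThan_telescope[of "\<lambda>i. X i s"] by simp
  qed
  have "Topt r p g L s = L s" for s
  proof -
    have "(\<lambda>n. X (Suc n) s) \<longlonglongrightarrow> L s" using conv LIMSEQ_Suc by blast
    moreover have "(\<lambda>n. X (Suc n) s) \<longlonglongrightarrow> Topt r p g L s"
    proof -
      define D where "D n = (\<Sum>s'\<in>UNIV. \<bar>X n s' - L s'\<bar>)" for n
      have D0: "D \<longlonglongrightarrow> 0"
      proof -
        have "(\<lambda>n. (\<Sum>s'\<in>UNIV. \<bar>X n s' - L s'\<bar>)) \<longlonglongrightarrow> (\<Sum>s'\<in>(UNIV::'a set). 0)"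
          by (intro tendsto_sum tendsto_rabs_zero LIM_zero conv)
        thus ?thesis unfolding D_def by simp
      qed
      have le: "\<bar>X n s' - L s'\<bar> \<le> D n" for n s'
        unfolding D_def by (rule member_le_sum) auto
      have "(\<lambda>n. Topt r p g (X n) s - Topt r p g L s) \<longlonglongrightarrow> 0"
      proof (rule Lim_null_comparison)
        show "\<forall>\<^sub>F n in sequentially. norm (Topt r p g (X n) s - Topt r p g L s) \<le> g * D n"
        proof (rule always_eventually, rule allI)
          fix n
          have a: "\<And>s'. X n s' - L s' \<le> D n" and b: "\<And>s'. L s' - X n s' \<le> D n"
            using le by (smt (verit))+
          have "Topt r p g (X n) s - Topt r p g L s \<le> g * D n" by (rule Topt_up[OF m a])
          moreover have "Topt r p g L s - Topt r p g (X n) s \<le> g * D n" by (rule Topt_up[OF m b])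
          ultimately show "norm (Topt r p g (X n) s - Topt r p g L s) \<le> g * D n" by simp
        qed
        show "(\<lambda>n. g * D n) \<longlonglongrightarrow> 0" using tendsto_mult_right_zero[OF D0] by simp
      qed
      hence "(\<lambda>n. Topt r p g (X n) s) \<longlonglongrightarrow> Topt r p g L s" by (simp add: LIM_zero_iff)
      thus ?thesis by (simp add: XS)
    qed
    ultimately show ?thesis using LIMSEQ_unique by metis
  qed
  thus ?thesis by blast
qed

lemma vopt_fix:
  assumes m: "mdp r p g"
  shows "Topt r p g (vopt r p g) = vopt r p g"
proof -
  obtain v where v: "Topt r p g v = v" using Topt_exists[OF m] by blast
  have "\<exists>!v. Topt r p g v = v"
    using v Topt_uniq[OF m] by (intro ex1I[of _ v]) (auto intro: antisym)
  thus ?thesis unfolding vopt_def by (rule theI')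
qed



lemma if01_mult: "(if c then 1 else 0) * (x::real) = (if c then x else 0)" by simp
lemma mult_if01: "(x::real) * (if c then 1 else 0) = (if c then x else 0)" by simp

lemma Pprod_props:
  assumes m: "mdp r p g"
  shows "(\<forall>s s'. 0 \<le> Pprod p \<sigma> t s s') \<and> (\<forall>s. (\<Sum>s'\<in>UNIV. Pprod p \<sigma> t s s') = 1)"
proof (induction t)
  case 0 then show ?case by simp
next
  case (Suc t)
  have P0: "\<And>s a s'. 0 \<le> p s a s'" and P1: "\<And>s a. (\<Sum>s'\<in>UNIV. p s a s') = 1"
    using m unfolding mdp_def by auto
  have "0 \<le> Pprod p \<sigma> (Suc t) s s'" for s s'
    using Suc P0 by (simp add: Pmat_def sum_nonneg)
  moreover have "(\<Sum>s'\<in>UNIV. Pprod p \<sigma> (Suc t) s s') = 1" for s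
  proof -
    have "(\<Sum>s'\<in>UNIV. Pprod p \<sigma> (Suc t) s s') = (\<Sum>u\<in>UNIV. Pprod p \<sigma> t s u * (\<Sum>s'\<in>UNIV. Pmat p (\<sigma> t) u s'))"
      by (simp only: Pprod.simps sum_distrib_left) (rule sum.swap)
    also have "\<dots> = 1" using Suc P1 by (simp add: Pmat_def)
    finally show ?thesis .
  qed
  ultimately show ?case by blast
qed

lemma Pprod_le1:
  assumes m: "mdp r p g"
  shows "Pprod p \<sigma> t s s' \<le> 1"
proof -
  have "Pprod p \<sigma> t s s' \<le> (\<Sum>s'\<in>UNIV. Pprod p \<sigma> t s s')"
    by (rule member_le_sum) (use Pprod_props[OF m] in auto)
  thus ?thesis using Pprod_props[OF m] by simp
qed

lemma Pprod_Suc_left: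
  "Pprod p \<sigma> (Suc t) s s' = (\<Sum>u\<in>UNIV. Pmat p (\<sigma> 0) s u * Pprod p (\<lambda>i. \<sigma> (Suc i)) t u s')"
proof (induction t arbitrary: s')
  case 0 then show ?case by (simp add: if01_mult mult_if01)
next
  case (Suc t)
  have "Pprod p \<sigma> (Suc (Suc t)) s s' = (\<Sum>u\<in>UNIV. Pprod p \<sigma> (Suc t) s u * Pmat p (\<sigma> (Suc t)) u s')"
    by simp
  also have "\<dots> = (\<Sum>u\<in>UNIV. (\<Sum>w\<in>UNIV. Pmat p (\<sigma> 0) s w * Pprod p (\<lambda>i. \<sigma> (Suc i)) t w u) * Pmat p (\<sigma> (Suc t)) u s')"
    using Suc by simp
  also have "\<dots> = (\<Sum>w\<in>UNIV. Pmat p (\<sigma> 0) s w * (\<Sum>u\<in>UNIV. Pprod p (\<lambda>i. \<sigma> (Suc i)) t w u * Pmat p (\<sigma> (Suc t)) u s'))"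
    by (simp only: sum_distrib_left sum_distrib_right mult.assoc) (rule sum.swap)
  also have "\<dots> = (\<Sum>w\<in>UNIV. Pmat p (\<sigma> 0) s w * Pprod p (\<lambda>i. \<sigma> (Suc i)) (Suc t) w s')"
    by simp
  finally show ?case .
qed

definition trm where
  "trm r p g \<sigma> s t = g ^ t * (\<Sum>s'\<in>UNIV. Pprod p \<sigma> t s s' * r s' (\<sigma> t s'))"

lemma vns_trm: "vns r p g \<sigma> s = (\<Sum>t. trm r p g \<sigma> s t)"
  unfolding vns_def trm_def ..

lemma trm_summable:
  assumes m: "mdp r p g"
  shows "summable (trm r p g \<sigma> s)"
proof (rule summable_comparison_test)
  have g0: "0 \<le> g" and g1: "g < 1" using m unfolding mdp_def by auto
  define B where "B = (\<Sum>s'\<in>UNIV. \<Sum>a\<in>UNIV. \<bar>r s' a\<bar>)"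
  show "summable (\<lambda>n. g ^ n * B)" using g0 g1 by (intro summable_mult2 summable_geometric) simp
  have "norm (trm r p g \<sigma> s t) \<le> g ^ t * B" for t
  proof -
    have "\<bar>\<Sum>s'\<in>UNIV. Pprod p \<sigma> t s s' * r s' (\<sigma> t s')\<bar> \<le> (\<Sum>s'\<in>UNIV. \<bar>Pprod p \<sigma> t s s' * r s' (\<sigma> t s')\<bar>)"
      by (rule sum_abs)
    also have "\<dots> \<le> B" unfolding B_def
    proof (rule sum_mono)
      fix s'
      have "\<bar>Pprod p \<sigma> t s s'\<bar> \<le> 1" using Pprod_props[OF m] Pprod_le1[OF m] by auto
      hence "\<bar>Pprod p \<sigma> t s s' * r s' (\<sigma> t s')\<bar> \<le> \<bar>r s' (\<sigma> t s')\<bar>"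
        by (simp add: abs_mult mult_left_le_one_le)
      also have "\<dots> \<le> (\<Sum>a\<in>UNIV. \<bar>r s' a\<bar>)" by (rule member_le_sum) auto
      finally show "\<bar>Pprod p \<sigma> t s s' * r s' (\<sigma> t s')\<bar> \<le> (\<Sum>a\<in>UNIV. \<bar>r s' a\<bar>)" .
    qed
    finally show ?thesis unfolding trm_def using g0 by (simp add: abs_mult mult_left_mono)
  qed
  thus "\<exists>N. \<forall>n\<ge>N. norm (trm r p g \<sigma> s n) \<le> g ^ n * B" by blast
qed

lemma vns_shift:
  assumes m: "mdp r p g"
  shows "vns r p g \<sigma> s = Tpol r p g (\<sigma> 0) (vns r p g (\<lambda>i. \<sigma> (Suc i))) s"
proof -
  define \<sigma>' where "\<sigma>' = (\<lambda>i. \<sigma> (Suc i))"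
  have tS: "trm r p g \<sigma> s (Suc t) = g * (\<Sum>u\<in>UNIV. Pmat p (\<sigma> 0) s u * trm r p g \<sigma>' u t)" for t
  proof -
    have "(\<Sum>s'\<in>UNIV. (\<Sum>u\<in>UNIV. Pmat p (\<sigma> 0) s u * Pprod p \<sigma>' t u s') * r s' (\<sigma>' t s'))
      = (\<Sum>u\<in>UNIV. Pmat p (\<sigma> 0) s u * (\<Sum>s'\<in>UNIV. Pprod p \<sigma>' t u s' * r s' (\<sigma>' t s')))"
      by (simp only: sum_distrib_left sum_distrib_right mult.assoc) (rule sum.swap)
    thus ?thesis unfolding trm_def Pprod_Suc_left \<sigma>'_def
      by (simp add: sum_distrib_left mult_ac)
  qed
  have t0: "trm r p g \<sigma> s 0 = r s (\<sigma> 0 s)"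
    unfolding trm_def by (simp add: if01_mult)
  have "vns r p g \<sigma> s = trm r p g \<sigma> s 0 + (\<Sum>t. trm r p g \<sigma> s (Suc t))"
    unfolding vns_trm using suminf_split_head[OF trm_summable[OF m]] by simp
  also have "(\<Sum>t. trm r p g \<sigma> s (Suc t)) = g * (\<Sum>t. \<Sum>u\<in>UNIV. Pmat p (\<sigma> 0) s u * trm r p g \<sigma>' u t)"
    unfolding tS
    by (rule suminf_mult) (intro summable_sum summable_mult trm_summable[OF m])
  also have "(\<Sum>t. \<Sum>u\<in>UNIV. Pmat p (\<sigma> 0) s u * trm r p g \<sigma>' u t) = (\<Sum>u\<in>UNIV. \<Sum>t. Pmat p (\<sigma> 0) s u * trm r p g \<sigma>' u t)"
    by (rule suminf_sum) (intro summable_mult trm_summable[OF m])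
  also have "\<dots> = (\<Sum>u\<in>UNIV. Pmat p (\<sigma> 0) s u * vns r p g \<sigma>' u)"
    by (intro sum.cong refl) (simp add: vns_trm suminf_mult trm_summable[OF m])
  finally show ?thesis unfolding Tpol_def t0 \<sigma>'_def by simp
qed



fun Cmp where
  "Cmp r p g \<pi> x 0 = x"
| "Cmp r p g \<pi> x (Suc i) = Tpol r p g (\<pi> (Suc i)) (Cmp r p g \<pi> x i)"

lemma periodic:
  assumes m: "mdp r p g" and k: "k \<ge> 1"
  shows "i \<le> k \<Longrightarrow> Cmp r p g \<pi> (vns r p g (\<lambda>t. \<pi> (k - t mod k))) i
          = vns r p g (\<lambda>t. \<pi> (k - (t + (k - i)) mod k))"
proof (induction i)
  case 0 then show ?case by simp
next
  case (Suc i)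
  hence IH: "Cmp r p g \<pi> (vns r p g (\<lambda>t. \<pi> (k - t mod k))) i = vns r p g (\<lambda>t. \<pi> (k - (t + (k - i)) mod k))"
    by simp
  have e1: "(\<lambda>t. \<pi> (k - (Suc t + (k - Suc i)) mod k)) = (\<lambda>t. \<pi> (k - (t + (k - i)) mod k))"
    using Suc.prems by (intro ext) (simp add: Suc_diff_Suc)
  have e2: "\<pi> (k - (0 + (k - Suc i)) mod k) = \<pi> (Suc i)"
    using Suc.prems k by simp
  have "vns r p g (\<lambda>t. \<pi> (k - (t + (k - Suc i)) mod k)) s
     = Tpol r p g (\<pi> (k - (0 + (k - Suc i)) mod k)) (vns r p g (\<lambda>t. \<pi> (k - (Suc t + (k - Suc i)) mod k))) s" for s
    by (rule vns_shift[OF m])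
  hence "vns r p g (\<lambda>t. \<pi> (k - (t + (k - Suc i)) mod k))
     = Tpol r p g (\<pi> (Suc i)) (vns r p g (\<lambda>t. \<pi> (k - (t + (k - i)) mod k)))"
    unfolding e1 e2 by (intro ext)
  thus ?case using IH by simp
qed


lemma a1: fixes g e X0 :: real assumes "g < 1"
  shows "g * (g ^ j * X0 + e * (1 - g ^ j) / (1 - g)) + e = g ^ Suc j * X0 + e * (1 - g ^ Suc j) / (1 - g)"
proof -
  have ne: "1 - g \<noteq> 0" using assms by simp
  have "e * (1 - g ^ Suc j) / (1 - g) = (g * (e * (1 - g ^ j)) + e * (1 - g)) / (1 - g)"
    by (simp add: algebra_simps)
  also have "\<dots> = g * (e * (1 - g ^ j) / (1 - g)) + e" using ne by (simp add: add_divide_distrib)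
  finally show ?thesis by (simp add: algebra_simps)
qed
lemma a2: fixes g e S M :: real assumes "g < 1" "k = Suc K"
  "M \<le> g * (g ^ K * (S + M) + e * (1 - g ^ K) / (1 - g))"
  shows "M * (1 - g ^ k) \<le> g ^ k * S + e * (g - g ^ k) / (1 - g)"
proof -
  have "g * (g ^ K * (S + M) + e * (1 - g ^ K) / (1 - g)) = g ^ k * S + g ^ k * M + e * (g - g ^ k) / (1 - g)"
    using assms(2) by (simp add: algebra_simps)
  thus ?thesis using assms(3) by (simp add: algebra_simps)
qed
lemma a3: fixes g e S :: real assumes "g < 1" "g ^ k < 1"
  shows "(g ^ k * S + e * (g - g ^ k) / (1 - g)) / (1 - g ^ k) = (g / (1 - g) - g ^ k / (1 - g ^ k)) * e + g ^ k / (1 - g ^ k) * S"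
proof -
  have n1: "1 - g \<noteq> 0" and n2: "1 - g ^ k \<noteq> 0" using assms by auto
  have "g / (1 - g) - g ^ k / (1 - g ^ k) = (g - g ^ k) / ((1 - g) * (1 - g ^ k))"
    using n1 n2 by (simp add: field_simps)
  moreover have "(g ^ k * S + e * (g - g ^ k) / (1 - g)) / (1 - g ^ k) = g ^ k * S / (1 - g ^ k) + e * (g - g ^ k) / (1 - g) / (1 - g ^ k)"
    by (rule add_divide_distrib)
  moreover have "e * (g - g ^ k) / (1 - g) / (1 - g ^ k) = (g - g ^ k) / ((1 - g) * (1 - g ^ k)) * e"
    by (simp add: divide_divide_eq_left)
  ultimately show ?thesis by simp
qed

lemma span_nonneg: "0 \<le> span (f::'s::finite \<Rightarrow> real)"
  unfolding span_mx using mx_ge[of f undefined] mn_le[of f undefined] by linarith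

theorem mainTheorem4:
  fixes r :: "'s::finite \<Rightarrow> 'a::finite \<Rightarrow> real"
    and p :: "'s \<Rightarrow> 'a \<Rightarrow> 's \<Rightarrow> real"
    and g :: real
    and v :: "nat \<Rightarrow> 's \<Rightarrow> real"
    and \<pi> :: "nat \<Rightarrow> 's \<Rightarrow> 'a"
    and e :: "nat \<Rightarrow> 's \<Rightarrow> real"
    and k :: nat
  assumes "mdp r p g"
    and "k \<ge> 1"
    and "\<And>j. j < k \<Longrightarrow> greedy r p g (\<pi> (Suc j)) (v j)"
    and "\<And>j. Suc j < k \<Longrightarrow> v (Suc j) = (\<lambda>s. Tpol r p g (\<pi> (Suc j)) (v j) s + e (Suc j) s)"
  shows "supnorm (\<lambda>s. vopt r p g s - vns r p g (\<lambda>t. \<pi> (k - t mod k)) s)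
     \<le> (g / (1 - g) - g ^ k / (1 - g ^ k))
         * (if k = 1 then 0 else Max ((\<lambda>j. span (e j)) ` {1..<k}))
       + g ^ k / (1 - g ^ k) * span (\<lambda>s. vopt r p g s - v 0 s)"
proof -
  note m = assms(1)
  have g0: "0 \<le> g" and g1: "g < 1" using m unfolding mdp_def by auto
  define vs where "vs = vopt r p g"
  define w where "w = vns r p g (\<lambda>t. \<pi> (k - t mod k))"
  define d where "d s = vs s - w s" for s
  define \<epsilon> where "\<epsilon> = (if k = 1 then 0 else Max ((\<lambda>j. span (e j)) ` {1..<k}))"
  have vsfix: "Topt r p g vs = vs" unfolding vs_def by (rule vopt_fix[OF m])
  have wk: "Cmp r p g \<pi> w k = w"
    using periodic[OF m assms(2), of k \<pi>] unfolding w_def by simp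
  have eps0: "0 \<le> \<epsilon>"
  proof (cases "k = 1")
    case False
    have "span (e 1) \<le> Max ((\<lambda>j. span (e j)) ` {1..<k})"
      by (rule Max_ge) (use False assms(2) in auto)
    hence "span (e 1) \<le> \<epsilon>" unfolding \<epsilon>_def using False by simp
    thus ?thesis using span_nonneg[of "e 1"] by linarith
  qed (simp add: \<epsilon>_def)
  have epsj: "span (e j) \<le> \<epsilon>" if "1 \<le> j" "j < k" for j
  proof -
    have "span (e j) \<le> Max ((\<lambda>j. span (e j)) ` {1..<k})"
      by (rule Max_ge) (use that in auto)
    thus ?thesis unfolding \<epsilon>_def using that by simp
  qed
  have gk0: "0 \<le> g ^ k" and gk1: "g ^ k < 1" using g0 g1 assms(2)
    by (auto simp: power_less_one_iff)
  define c where "c = mn d"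
  have A: "i \<le> k \<Longrightarrow> (\<forall>s. Cmp r p g \<pi> vs i s \<le> vs s \<and> g ^ i * c \<le> Cmp r p g \<pi> vs i s - Cmp r p g \<pi> w i s)" for i
  proof (induction i)
    case 0
    have "c \<le> d s" for s unfolding c_def by (rule mn_le)
    then show ?case unfolding d_def by simp
  next
    case (Suc i)
    hence IH: "\<And>s. Cmp r p g \<pi> vs i s \<le> vs s" "\<And>s. g ^ i * c \<le> Cmp r p g \<pi> vs i s - Cmp r p g \<pi> w i s"
      by auto
    show ?case
    proof
      fix s
      have a1: "\<And>s. Cmp r p g \<pi> vs i s - vs s \<le> 0" using IH(1) by simp
      have "Tpol r p g (\<pi> (Suc i)) (Cmp r p g \<pi> vs i) s - Tpol r p g (\<pi> (Suc i)) vs s \<le> g * 0"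
        by (rule Tpol_up[OF m a1])
      moreover have "Tpol r p g (\<pi> (Suc i)) vs s \<le> vs s"
        using Topt_ge[of r p g "\<pi> (Suc i)" vs s] vsfix by simp
      moreover have "g * (g ^ i * c) \<le> Tpol r p g (\<pi> (Suc i)) (Cmp r p g \<pi> vs i) s - Tpol r p g (\<pi> (Suc i)) (Cmp r p g \<pi> w i) s"
        by (rule Tpol_low[OF m IH(2)])
      ultimately show "Cmp r p g \<pi> vs (Suc i) s \<le> vs s \<and> g ^ Suc i * c \<le> Cmp r p g \<pi> vs (Suc i) s - Cmp r p g \<pi> w (Suc i) s"
        by (simp add: mult.assoc)
    qed
  qed
  have "\<forall>s. g ^ k * c \<le> d s"
  proof
    fix s
    from A[of k] wk have "Cmp r p g \<pi> vs k s \<le> vs s" "g ^ k * c \<le> Cmp r p g \<pi> vs k s - w s" by auto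
    thus "g ^ k * c \<le> d s" unfolding d_def by linarith
  qed
  moreover obtain s0 where "c = d s0" unfolding c_def using mn_att by blast
  ultimately have "g ^ k * c \<le> c" by simp
  hence "0 \<le> (1 - g ^ k) * c" by (simp add: algebra_simps)
  hence "0 \<le> c" using gk1 by (simp add: zero_le_mult_iff)
  hence dnn: "0 \<le> d s" for s unfolding c_def using mn_le[of d s] by linarith
  have sup: "supnorm d = mx d"
    unfolding supnorm_def mx_def using dnn by simp
  define a where "a j s = vs s - v j s" for j s
  define b where "b j s = v j s - Cmp r p g \<pi> w j s" for j s
  define X where "X j = mx (a j) + mx (b j)" for j
  have opt_step: "vs s - Tpol r p g (\<pi> (Suc j)) (v j) s \<le> g * mx (a j)" if "j < k" for j s
  proof -
    have gr: "Tpol r p g (\<pi> (Suc j)) (v j) = Topt r p g (v j)"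
      using assms(3)[OF that] unfolding greedy_def .
    have aa: "\<And>s. vs s - v j s \<le> mx (a j)" using mx_ge[of "a j"] unfolding a_def by simp
    have "Topt r p g vs s - Topt r p g (v j) s \<le> g * mx (a j)" by (rule Topt_up[OF m aa])
    thus ?thesis using gr vsfix by simp
  qed
  have b_step: "Tpol r p g (\<pi> (Suc j)) (v j) s - Tpol r p g (\<pi> (Suc j)) (Cmp r p g \<pi> w j) s \<le> g * mx (b j)" for j s
  proof -
    have bb: "\<And>s. v j s - Cmp r p g \<pi> w j s \<le> mx (b j)" using mx_ge[of "b j"] unfolding b_def by simp
    show ?thesis by (rule Tpol_up[OF m bb])
  qed
  have Xstep: "X (Suc j) \<le> g * X j + \<epsilon>" if "Suc j < k" for j
  proof -
    have vS: "v (Suc j) s = Tpol r p g (\<pi> (Suc j)) (v j) s + e (Suc j) s" for s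
      using assms(4)[OF that] by simp
    have "mx (a (Suc j)) \<le> g * mx (a j) - mn (e (Suc j))"
    proof (rule mx_le)
      fix s
      show "a (Suc j) s \<le> g * mx (a j) - mn (e (Suc j))"
        using opt_step[of j s] that mn_le[of "e (Suc j)" s] vS[of s] unfolding a_def by simp
    qed
    moreover have "mx (b (Suc j)) \<le> g * mx (b j) + mx (e (Suc j))"
    proof (rule mx_le)
      fix s
      show "b (Suc j) s \<le> g * mx (b j) + mx (e (Suc j))"
        using b_step[of j s] mx_ge[of "e (Suc j)" s] vS[of s] unfolding b_def by simp
    qed
    moreover have "span (e (Suc j)) \<le> \<epsilon>" using epsj that by simp
    ultimately show ?thesis unfolding X_def span_mx by (simp add: algebra_simps)
  qed
  have Xbound: "j < k \<Longrightarrow> X j \<le> g ^ j * X 0 + \<epsilon> * (1 - g ^ j) / (1 - g)" for j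
  proof (induction j)
    case 0 then show ?case by simp
  next
    case (Suc j)
    hence "X j \<le> g ^ j * X 0 + \<epsilon> * (1 - g ^ j) / (1 - g)" by simp
    hence "g * X j \<le> g * (g ^ j * X 0 + \<epsilon> * (1 - g ^ j) / (1 - g))" using g0 by (rule mult_left_mono)
    hence "X (Suc j) \<le> g * (g ^ j * X 0 + \<epsilon> * (1 - g ^ j) / (1 - g)) + \<epsilon>"
      using Xstep[of j] Suc.prems by linarith
    also have "\<dots> = g ^ Suc j * X 0 + \<epsilon> * (1 - g ^ Suc j) / (1 - g)"
      by (rule a1[OF g1])
    finally show ?case .
  qed
  have X0: "X 0 \<le> span (a 0) + mx d"
  proof -
    have "mx (b 0) \<le> mx d - mn (a 0)"
    proof (rule mx_le)
      fix s show "b 0 s \<le> mx d - mn (a 0)"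
        using mx_ge[of d s] mn_le[of "a 0" s] unfolding a_def b_def d_def by simp
    qed
    thus ?thesis unfolding X_def span_mx by simp
  qed
  obtain K where kK: "k = Suc K" using assms(2) by (cases k) auto
  have dX: "mx d \<le> g * X K"
  proof (rule mx_le)
    fix s
    have "w s = Tpol r p g (\<pi> (Suc K)) (Cmp r p g \<pi> w K) s"
      using wk kK by (metis Cmp.simps(2))
    hence "d s = (vs s - Tpol r p g (\<pi> (Suc K)) (v K) s)
       + (Tpol r p g (\<pi> (Suc K)) (v K) s - Tpol r p g (\<pi> (Suc K)) (Cmp r p g \<pi> w K) s)"
      unfolding d_def by simp
    also have "\<dots> \<le> g * mx (a K) + g * mx (b K)"
      using opt_step[of K s] b_step[of K s] kK by simp
    finally show "d s \<le> g * X K" unfolding X_def by (simp add: algebra_simps)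
  qed
  have "mx d \<le> g * (g ^ K * (span (a 0) + mx d) + \<epsilon> * (1 - g ^ K) / (1 - g))"
  proof -
    have "X K \<le> g ^ K * X 0 + \<epsilon> * (1 - g ^ K) / (1 - g)" using Xbound[of K] kK by simp
    also have "\<dots> \<le> g ^ K * (span (a 0) + mx d) + \<epsilon> * (1 - g ^ K) / (1 - g)"
      using X0 g0 by (simp add: mult_left_mono)
    finally have "g * X K \<le> g * (g ^ K * (span (a 0) + mx d) + \<epsilon> * (1 - g ^ K) / (1 - g))"
      using g0 by (rule mult_left_mono)
    thus ?thesis using dX by linarith
  qed
  hence "mx d * (1 - g ^ k) \<le> g ^ k * span (a 0) + \<epsilon> * (g - g ^ k) / (1 - g)"
    using a2[OF g1 kK] by blast
  hence "mx d \<le> (g ^ k * span (a 0) + \<epsilon> * (g - g ^ k) / (1 - g)) / (1 - g ^ k)"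
    using gk1 by (simp add: pos_le_divide_eq)
  also have "\<dots> = (g / (1 - g) - g ^ k / (1 - g ^ k)) * \<epsilon> + g ^ k / (1 - g ^ k) * span (a 0)"
    by (rule a3[OF g1 gk1])
  finally show ?thesis
    unfolding sup[symmetric] d_def w_def vs_def \<epsilon>_def a_def by simp
qed


end
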